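(* Let $T$ be a tree and $\mathfrak p=(R\overset{q}{\twoheadleftarrow}S\overset{i}{\hookrightarrow}T)\in\mathfrak P_T$. The subspace $\mathsf L_T(\mathfrak p)\subset\mathsf L_T$ of points leading to $\mathfrak p$ is an open cell of dimension $\rho(\mathfrak p)=|V(T)|-|V(R)|$. Its closure is a convex polyhedron in a Euclidean space, cut out by explicit equalities and inequalities on coordinate functions.
   Context: A tree is a nonempty finite connected acyclic graph with vertex set $V(T)$ and edge set $E(T)$ (two-element subsets of $V(T)$). Subgraphs are full (vertex-induced); a subtree is a subgraph which is a tree. A quotient tree $S\twoheadrightarrow R$ is a tree $R$ with a surjection $V(S)\to V(R)$ whose fibers are vertex sets of subtrees of $S$, vertices of $R$ adjacent iff an edge of $S$ joins their fibers. Arboreal singularity: for $\alpha\in V(T)$ let $\mathsf L_T(\alpha)=\mathbb R^{V(T)\setminus\{\alpha\}}$ with coordinates $x_\gamma(\alpha)$; $\mathsf L_T$ is the quotient of $\coprod_\alpha\mathsf L_T(\alpha)$ by the equivalence relation generated by identifying, for each edge $\{\alpha,\beta\}$, $\{x_\gamma(\alpha)\}\sim\{x_\gamma(\beta)\}$ whenever $x_\beta(\alpha)=x_\alpha(\beta)\ge0$ and $x_\gamma(\alpha)=x_\gamma(\beta)$ for $\gamma\ne\alpha,\beta$. Each $\mathsf L_T(\alpha)$ is regarded as a subspace of $\mathsf L_T$. For $x\in\mathsf L_T$: $S_x$ is the full subgraph of $T$ on $\{\alpha:x\in\mathsf L_T(\alpha)\}$ (a subtree), and $R_x$ is the quotient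 of $S_x$ contracting exactly the edges $\{\alpha,\beta\}\in E(S_x)$ with $x_\beta(\alpha)=x_\alpha(\beta)>0$ at $x$. $\mathfrak P_T$ is the set of correspondences $(R\overset{q}{\twoheadleftarrow}S\overset{i}{\hookrightarrow}T)$ with $i$ inclusion of a subtree and $q$ a quotient of trees (equivalently a subtree $S$ with a partition into subtrees, the fibers of $q$). $\mathsf L_T(\mathfrak p)=\{x\in\mathsf L_T:(R_x\twoheadleftarrow S_x\hookrightarrow T)=\mathfrak p\}$. *)

theory Defs
  imports "HOL-Analysis.Analysis"
begin

definition is_walk :: "'v set set \<Rightarrow> 'v list \<Rightarrow> bool" where
  "is_walk E xs \<longleftrightarrow> (\<forall>i. Suc i < length xs \<longrightarrow> {xs ! i, xs ! Suc i} \<in> E)"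

definition graph_connected :: "'v set \<Rightarrow> 'v set set \<Rightarrow> bool" where
  "graph_connected W E \<longleftrightarrow>
     (\<forall>u\<in>W. \<forall>v\<in>W. \<exists>xs. xs \<noteq> [] \<and> hd xs = u \<and> last xs = v \<and> set xs \<subseteq> W \<and> is_walk E xs)"

definition has_cycle :: "'v set \<Rightarrow> 'v set set \<Rightarrow> bool" where
  "has_cycle W E \<longleftrightarrow>
     (\<exists>xs. length xs \<ge> 3 \<and> distinct xs \<and> set xs \<subseteq> W \<and> is_walk E xs \<and> {last xs, hd xs} \<in> E)"

definition is_tree :: "'v set \<Rightarrow> 'v set set \<Rightarrow> bool" where
  "is_tree W E \<longleftrightarrow> finite W \<and> W \<noteq> {} \<and>
     (\<forall>e\<in>E. \<exists>u v. u \<noteq> v \<and> u \<in> W \<and> v \<in> W \<and> e = {u, v}) \<and>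
     graph_connected W E \<and> \<not> has_cycle W E"

definition induced :: "'v set set \<Rightarrow> 'v set \<Rightarrow> 'v set set" where
  "induced E A = {e \<in> E. e \<subseteq> A}"

definition is_subtree :: "'v set \<Rightarrow> 'v set set \<Rightarrow> 'v set \<Rightarrow> bool" where
  "is_subtree V E A \<longleftrightarrow> A \<subseteq> V \<and> is_tree A (induced E A)"

text \<open>The set of correspondences \<open>R \<leftarrow> S \<hookrightarrow> T\<close> for the tree T = (UNIV, E),
  represented (as in the paper) by a subtree S together with the partition P of
  S into subtrees given by the fibres of the quotient map q; then V(R) = P.\<close>
definition corresp :: "'v set set \<Rightarrow> ('v set \<times> 'v set set) set" where
  "corresp E = {(S, P). is_subtree UNIV E S \<and> \<Union>P = S \<and>
       (\<forall>C\<in>P. is_subtree UNIV E C) \<and>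
       (\<forall>C\<in>P. \<forall>D\<in>P. C \<noteq> D \<longrightarrow> C \<inter> D = {})}"

text \<open>A point of the chart \<open>L_T(\<alpha>) = \<real>^(V(T) - {\<alpha>})\<close> is encoded as a pair
  (\<alpha>, y) with y :: real^'v and y$\<alpha> = 0; the coordinate \<open>x_\<gamma>(\<alpha>)\<close> is y$\<gamma>.\<close>

definition raw_pts :: "('v::finite \<times> (real^'v)) set" where
  "raw_pts = {(\<alpha>, y). y $ \<alpha> = 0}"

definition glue_step :: "'v::finite set set \<Rightarrow> (('v \<times> (real^'v)) \<times> ('v \<times> (real^'v))) set" where
  "glue_step E = {((\<alpha>, y), (\<beta>, z)). {\<alpha>, \<beta>} \<in> E \<and> \<alpha> \<noteq> \<beta> \<and> y $ \<alpha> = 0 \<and> z $ \<beta> = 0 \<and>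
       y $ \<beta> = z $ \<alpha> \<and> y $ \<beta> \<ge> 0 \<and> (\<forall>\<gamma>. \<gamma> \<noteq> \<alpha> \<and> \<gamma> \<noteq> \<beta> \<longrightarrow> y $ \<gamma> = z $ \<gamma>)}"

definition glue_rel :: "'v::finite set set \<Rightarrow> (('v \<times> (real^'v)) \<times> ('v \<times> (real^'v))) set" where
  "glue_rel E = (glue_step E \<union> (glue_step E)\<inverse>)\<^sup>*"

definition LT :: "'v::finite set set \<Rightarrow> ('v \<times> (real^'v)) set set" where
  "LT E = raw_pts // glue_rel E"

definition chart :: "'v::finite set set \<Rightarrow> 'v \<Rightarrow> (real^'v) \<Rightarrow> ('v \<times> (real^'v)) set" where
  "chart E \<alpha> y = glue_rel E `` {(\<alpha>, y)}"

definition LT_top :: "'v::finite set set \<Rightarrow> ('v \<times> (real^'v)) set topology" where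
  "LT_top E = topology (\<lambda>U. U \<subseteq> LT E \<and>
     (\<forall>\<alpha>. openin (top_of_set {y. y $ \<alpha> = 0}) {y. y $ \<alpha> = 0 \<and> chart E \<alpha> y \<in> U}))"

definition in_chart :: "'v::finite \<Rightarrow> ('v \<times> (real^'v)) set \<Rightarrow> bool" where
  "in_chart \<alpha> x \<longleftrightarrow> (\<exists>y. (\<alpha>, y) \<in> x)"

definition coord :: "('v::finite \<times> (real^'v)) set \<Rightarrow> 'v \<Rightarrow> 'v \<Rightarrow> real" where
  "coord x \<alpha> \<gamma> = (THE y. (\<alpha>, y) \<in> x) $ \<gamma>"

definition S_of :: "('v::finite \<times> (real^'v)) set \<Rightarrow> 'v set" where
  "S_of x = {\<alpha>. in_chart \<alpha> x}"

definition contracted :: "'v::finite set set \<Rightarrow> ('v \<times> (real^'v)) set \<Rightarrow> ('v \<times> 'v) set" where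
  "contracted E x = {(\<alpha>, \<beta>). {\<alpha>, \<beta>} \<in> induced E (S_of x) \<and>
       coord x \<alpha> \<beta> = coord x \<beta> \<alpha> \<and> coord x \<alpha> \<beta> > 0}"

definition P_of :: "'v::finite set set \<Rightarrow> ('v \<times> (real^'v)) set \<Rightarrow> 'v set set" where
  "P_of E x = S_of x // ((contracted E x \<union> (contracted E x)\<inverse>)\<^sup>* \<inter> (S_of x \<times> S_of x))"

definition LT_cell :: "'v::finite set set \<Rightarrow> 'v set \<Rightarrow> 'v set set \<Rightarrow> ('v \<times> (real^'v)) set set" where
  "LT_cell E S P = {x \<in> LT E. S_of x = S \<and> P_of E x = P}"

end

theory Submission
  imports Defs
begin

fun wk :: "'v set set \<Rightarrow> 'v list \<Rightarrow> bool" where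
  "wk E (x # y # r) = ({x, y} \<in> E \<and> wk E (y # r))"
| "wk E _ = True"

lemma is_walk_Cons2: "is_walk E (x # y # r) \<longleftrightarrow> {x, y} \<in> E \<and> is_walk E (y # r)"
  unfolding is_walk_def
proof safe
  fix i assume "\<forall>i. Suc i < length (x # y # r) \<longrightarrow> {(x # y # r) ! i, (x # y # r) ! Suc i} \<in> E"
  then show "{x,y} \<in> E" and "Suc i < length (y # r) \<Longrightarrow> {(y # r) ! i, (y # r) ! Suc i} \<in> E"
    by (auto dest: spec[of _ 0] spec[of _ "Suc i"])
next
  fix i assume "{x,y} \<in> E" "\<forall>i. Suc i < length (y # r) \<longrightarrow> {(y # r) ! i, (y # r) ! Suc i} \<in> E"
    "Suc i < length (x # y # r)"
  then show "{(x # y # r) ! i, (x # y # r) ! Suc i} \<in> E"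
    by (cases i) auto
qed

lemma is_walk_wk: "is_walk E xs \<longleftrightarrow> wk E xs"
proof (induction E xs rule: wk.induct)
  case (1 E x y r) then show ?case by (simp add: is_walk_Cons2)
next
  case ("2_1" E) then show ?case by (simp add: is_walk_def)
next
  case ("2_2" E v) then show ?case by (simp add: is_walk_def)
qed

lemma wk_append [simp]:
  "wk E (xs @ ys) \<longleftrightarrow> wk E xs \<and> wk E ys \<and> (xs \<noteq> [] \<and> ys \<noteq> [] \<longrightarrow> {last xs, hd ys} \<in> E)"
proof (induction xs)
  case Nil then show ?case by simp
next
  case (Cons a xs) then show ?case
    by (cases xs; cases ys) auto
qed

lemma wk_Cons: "wk E (x # xs) \<longleftrightarrow> wk E xs \<and> (xs \<noteq> [] \<longrightarrow> {x, hd xs} \<in> E)"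
  by (cases xs) auto

lemma wk_rev [simp]: "wk E (rev xs) \<longleftrightarrow> wk E xs"
proof (induction xs)
  case Nil then show ?case by simp
next
  case (Cons a xs) then show ?case
    by (cases xs) (auto simp: insert_commute wk_Cons last_rev hd_rev)
qed

lemma wk_mono: "wk E xs \<Longrightarrow> E \<subseteq> E' \<Longrightarrow> wk E' xs"
  by (induction E xs rule: wk.induct) auto

definition isp :: "'v set set \<Rightarrow> 'v \<Rightarrow> 'v \<Rightarrow> 'v list \<Rightarrow> bool" where
  "isp E a b p \<longleftrightarrow> p \<noteq> [] \<and> hd p = a \<and> last p = b \<and> distinct p \<and> wk E p"

lemma path_exists:
  assumes "wk E xs" "xs \<noteq> []" "hd xs = a" "last xs = b" "set xs \<subseteq> W"
  shows "\<exists>p. isp E a b p \<and> set p \<subseteq> W"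
  using assms
proof (induction "length xs" arbitrary: xs rule: less_induct)
  case less
  show ?case
  proof (cases "distinct xs")
    case True then show ?thesis using less.prems unfolding isp_def by blast
  next
    case False
    then obtain ys x zs ws where xs: "xs = ys @ x # zs @ x # ws"
      using not_distinct_decomp[OF False] by (metis append_Cons append_Nil)
    define xs' where "xs' = ys @ x # ws"
    have "length xs' < length xs" by (simp add: xs xs'_def)
    moreover have "wk E xs'" using less.prems(1) by (auto simp: xs xs'_def wk_Cons)
    moreover have "xs' \<noteq> []" "hd xs' = a" "last xs' = b" "set xs' \<subseteq> W"
      using less.prems by (auto simp: xs xs'_def hd_append)
    ultimately show ?thesis using less.hyps by blast
  qed
qed

lemma cycle_from_paths:
  assumes "{a,x} \<in> E" "{a,y} \<in> E" "x \<noteq> y" "isp E x b u" "isp E y b v"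
    "a \<notin> set u" "a \<notin> set v"
  shows "has_cycle UNIV E"
proof -
  have "\<exists>z\<in>set u. z \<in> set v" using assms(4,5) unfolding isp_def
    by (metis last_in_set)
  then obtain u1 c u2 where u: "u = u1 @ c # u2" and c: "c \<in> set v" and u1: "\<forall>z\<in>set u1. z \<notin> set v"
    using split_list_first_prop[of u "\<lambda>z. z \<in> set v"] by blast
  obtain v1 v2 where v: "v = v1 @ c # v2" using c split_list by metis
  define xs where "xs = a # u1 @ c # rev v1"
  have du: "distinct u" "wk E u" "hd u = x" and dv: "distinct v" "wk E v" "hd v = y"
    using assms(4,5) unfolding isp_def by auto
  have "u1 \<noteq> [] \<or> v1 \<noteq> []"
  proof (rule ccontr)
    assume "\<not> ?thesis" then have "x = c" "y = c" using du dv u v by auto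
    then show False using assms(3) by simp
  qed
  then have len: "length xs \<ge> 3" unfolding xs_def by (cases u1; cases v1) auto
  have dist: "distinct xs" unfolding xs_def using du dv u v u1 assms(6,7) by auto
  have wk1: "wk E (u1 @ [c])" using du(2) u by (simp add: wk_Cons)
  have wk2: "wk E v1" "v1 \<noteq> [] \<Longrightarrow> {last v1, c} \<in> E" using dv(2) v by (auto simp: wk_Cons)
  have hdx: "hd (u1 @ [c]) = x" using du(3) u by (cases u1) auto
  have cv: "wk E (c # rev v1)"
    using wk2 by (auto simp: wk_Cons hd_rev insert_commute)
  have L: "wk E ((u1 @ [c]) @ rev v1)"
    using wk1 cv wk_append[of E "u1 @ [c]" "rev v1"] by (auto simp: wk_Cons hd_rev)
  have wkxs: "wk E xs"
    unfolding xs_def using L hdx assms(1) wk_Cons[of E a "(u1 @ [c]) @ rev v1"]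
    by (cases u1) auto
  have "{last xs, hd xs} \<in> E"
    unfolding xs_def using dv(3) v assms(2) by (cases v1) (auto simp: last_rev insert_commute)
  then show ?thesis unfolding has_cycle_def using len dist wkxs is_walk_wk by blast
qed

locale tree =
  fixes E :: "'v::finite set set"
  assumes tree: "is_tree UNIV E"
begin

lemma no_cycle: "\<not> has_cycle UNIV E"
  using tree unfolding is_tree_def by blast

lemma edge_neq: "{a, b} \<in> E \<Longrightarrow> a \<noteq> b"
  using tree unfolding is_tree_def by (metis doubleton_eq_iff insert_absorb2)

lemma path_unique: "isp E a b p \<Longrightarrow> isp E a b q \<Longrightarrow> p = q"
proof (induction p arbitrary: a q)
  case Nil then show ?case by (simp add: isp_def)
next
  case (Cons a' p)
  have a': "a' = a" using Cons.prems by (simp add: isp_def)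
  obtain q' where q: "q = a # q'" using Cons.prems unfolding isp_def
    by (metis list.collapse)
  show ?case
  proof (cases p)
    case Nil
    then have "b = a" using Cons.prems a' by (simp add: isp_def)
    have "q' = []"
    proof (rule ccontr)
      assume "q' \<noteq> []"
      then have "last q \<in> set q'" using q by simp
      then show False using Cons.prems(2) q \<open>b = a\<close> by (auto simp: isp_def)
    qed
    then show ?thesis using q a' Nil by simp
  next
    case (Cons x p')
    have "q' \<noteq> []"
    proof
      assume "q' = []"
      then have "b = a" using Cons.prems(2) q by (simp add: isp_def)
      moreover have "last (a' # x # p') \<in> set (x # p')" by simp
      ultimately show False using Cons.prems(1) \<open>p = x # p'\<close> a'
        by (auto simp: isp_def simp del: last.simps)
    qed
    then obtain y q'' where q': "q' = y # q''" by (metis list.exhaust)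
    have P1: "isp E x b (x # p')" using Cons.prems(1) \<open>p = x # p'\<close> by (auto simp: isp_def)
    have Q1: "isp E y b (y # q'')" using Cons.prems(2) q q' by (auto simp: isp_def)
    show ?thesis
    proof (cases "x = y")
      case True
      then have "p = q'" using Cons.IH[of x q'] P1 Q1 q' \<open>p = x # p'\<close> by simp
      then show ?thesis using q a' by simp
    next
      case False
      have "has_cycle UNIV E"
      proof (rule cycle_from_paths[OF _ _ False P1 Q1])
        show "{a, x} \<in> E" using Cons.prems(1) \<open>p = x # p'\<close> a' by (simp add: isp_def)
        show "{a, y} \<in> E" using Cons.prems(2) q q' by (simp add: isp_def)
        show "a \<notin> set (x # p')" using Cons.prems(1) \<open>p = x # p'\<close> a' by (simp add: isp_def)
        show "a \<notin> set (y # q'')" using Cons.prems(2) q q' by (simp add: isp_def)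
      qed
      then show ?thesis using no_cycle by simp
    qed
  qed
qed

lemma path_ex: "\<exists>p. isp E a b p"
proof -
  have "graph_connected UNIV E" using tree by (simp add: is_tree_def)
  then obtain xs where "xs \<noteq> []" "hd xs = a" "last xs = b" "is_walk E xs"
    unfolding graph_connected_def by blast
  then show ?thesis using path_exists[of E xs a b UNIV] by (auto simp: is_walk_wk)
qed

definition pth :: "'v \<Rightarrow> 'v \<Rightarrow> 'v list" where
  "pth a b = (THE p. isp E a b p)"

lemma pth: "isp E a b (pth a b)"
  unfolding pth_def using path_ex path_unique by (metis theI)

lemma pth_eq: "isp E a b p \<Longrightarrow> pth a b = p"
  using pth path_unique by blast

lemma pth_simps: "pth a b \<noteq> []" "hd (pth a b) = a" "last (pth a b) = b" "distinct (pth a b)"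
  "wk E (pth a b)"
  using pth[of a b] by (auto simp: isp_def)

lemma pth_self [simp]: "pth a a = [a]"
  by (rule pth_eq) (simp add: isp_def)

lemma pth_prefix: "pth a b = p1 @ c # p2 \<Longrightarrow> pth a c = p1 @ [c]"
proof (rule pth_eq)
  assume h: "pth a b = p1 @ c # p2"
  show "isp E a c (p1 @ [c])"
    using pth_simps[of a b] h unfolding isp_def by (cases p1) (auto simp: wk_Cons hd_append)
qed

lemma pth_suffix: "pth a b = p1 @ c # p2 \<Longrightarrow> pth c b = c # p2"
proof (rule pth_eq)
  assume h: "pth a b = p1 @ c # p2"
  show "isp E c b (c # p2)"
    using pth_simps[of a b] h unfolding isp_def by (cases p2) auto
qed

lemma edge_pth:
  assumes "{b, c} \<in> E"
  shows "pth a c = pth a b @ [c] \<or> pth a b = pth a c @ [b]"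
proof (cases "c \<in> set (pth a b)")
  case True
  then obtain p1 p2 where h: "pth a b = p1 @ c # p2" by (meson split_list)
  have "pth c b = c # p2" using pth_suffix[OF h] .
  moreover have "pth c b = [c, b]"
    by (rule pth_eq) (use assms edge_neq in \<open>auto simp: isp_def insert_commute\<close>)
  ultimately have "p2 = [b]" by simp
  then show ?thesis using h pth_prefix[OF h] by simp
next
  case False
  have "pth a c = pth a b @ [c]"
    by (rule pth_eq)
       (use False pth_simps[of a b] assms in \<open>auto simp: isp_def hd_append\<close>)
  then show ?thesis by simp
qed

end

lemma wk_rtrancl:
  assumes "wk E xs" "xs \<noteq> []" "set xs \<subseteq> C"
    "\<And>a b. {a, b} \<in> E \<Longrightarrow> a \<in> C \<Longrightarrow> b \<in> C \<Longrightarrow> (a, b) \<in> F"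
  shows "(hd xs, last xs) \<in> F\<^sup>*"
  using assms(1-3)
proof (induction xs)
  case (Cons x xs)
  show ?case
  proof (cases xs)
    case (Cons y r)
    then have "(y, last (y # r)) \<in> F\<^sup>*" using Cons.IH Cons.prems by simp
    moreover have "(x, y) \<in> F" using Cons.prems \<open>xs = y # r\<close> assms(4) by auto
    ultimately show ?thesis using \<open>xs = y # r\<close> by (simp add: converse_rtrancl_into_rtrancl)
  qed simp
qed simp

lemma subtree_walk:
  assumes "is_subtree UNIV E C" "u \<in> C" "w \<in> C"
  obtains xs where "wk E xs" "xs \<noteq> []" "hd xs = u" "last xs = w" "set xs \<subseteq> C"
proof -
  have "graph_connected C (induced E C)" using assms(1) by (simp add: is_subtree_def is_tree_def)
  then obtain xs where "xs \<noteq> []" "hd xs = u" "last xs = w" "set xs \<subseteq> C" "is_walk (induced E C) xs"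
    using assms unfolding graph_connected_def by blast
  moreover have "wk E xs" using calculation(5) wk_mono[of "induced E C" xs E]
    by (auto simp: is_walk_wk induced_def)
  ultimately show ?thesis using that by blast
qed

locale rtree = tree E for E :: "'v::finite set set" + fixes r :: 'v
begin

definition par :: "'v \<Rightarrow> 'v" where "par v = last (butlast (pth r v))"

lemma par_pth: assumes "v \<noteq> r" shows "pth r v = pth r (par v) @ [v]"
proof -
  have "pth r v = butlast (pth r v) @ [v]" using pth_simps[of r v]
    by (metis append_butlast_last_id)
  moreover have "butlast (pth r v) \<noteq> []"
    using pth_simps[of r v] assms by (cases "pth r v" rule: rev_cases) auto
  ultimately obtain p1 where "pth r v = p1 @ par v # [v]" "butlast (pth r v) = p1 @ [par v]"
    unfolding par_def by (metis append_butlast_last_id append_Cons append_Nil append_assoc)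
  then show ?thesis using pth_prefix by force
qed

lemma par_edge: "v \<noteq> r \<Longrightarrow> {par v, v} \<in> E"
  using par_pth[of v] pth_simps(5)[of r v] by (simp add: pth_simps)

lemma par_neq: "v \<noteq> r \<Longrightarrow> par v \<noteq> v"
  using par_edge edge_neq by blast

lemma par_len: "v \<noteq> r \<Longrightarrow> length (pth r (par v)) < length (pth r v)"
  using par_pth by (metis length_append_singleton lessI)

lemma par_induct:
  assumes "P r" "\<And>v. v \<noteq> r \<Longrightarrow> P (par v) \<Longrightarrow> P v"
  shows "P v"
proof (induction "length (pth r v)" arbitrary: v rule: less_induct)
  case less then show ?case using assms par_len by (cases "v = r") auto
qed

lemma pth_r_neq: "pth r c = p @ [c] \<Longrightarrow> p \<noteq> [] \<Longrightarrow> c \<noteq> r"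
  by (metis append_self_conv2 list.inject pth_self)

lemma edge_par: "{b, c} \<in> E \<Longrightarrow> (c \<noteq> r \<and> par c = b) \<or> (b \<noteq> r \<and> par b = c)"
proof -
  assume e: "{b, c} \<in> E"
  show ?thesis
  proof (cases "pth r c = pth r b @ [c]")
    case True
    then have "c \<noteq> r" using pth_r_neq pth_simps(1) by blast
    then show ?thesis using True par_pth[of c] pth_simps(3)[of r b] pth_simps(3)[of r "par c"] by simp
  next
    case False
    then have h: "pth r b = pth r c @ [b]" using edge_pth[OF e] by blast
    then have "b \<noteq> r" using pth_r_neq pth_simps(1) by blast
    then show ?thesis using h par_pth[of b] pth_simps(3)[of r c] pth_simps(3)[of r "par b"] by simp
  qed
qed

lemma edge_iff_par: "{b, c} \<in> E \<longleftrightarrow> (c \<noteq> r \<and> par c = b) \<or> (b \<noteq> r \<and> par b = c)"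
  using edge_par par_edge by (auto simp: insert_commute)

definition D :: "'v \<Rightarrow> 'v set" where "D v = {w. v \<in> set (pth r w)}"

lemma D_self: "v \<in> D v"
  unfolding D_def using pth_simps(1,3)[of r v] by (metis last_in_set mem_Collect_eq)

lemma par_notin_D: "v \<noteq> r \<Longrightarrow> par v \<notin> D v"
  unfolding D_def using par_pth[of v] pth_simps(4)[of r v] by auto

lemma desc_edge:
  assumes "{a, b} \<in> E" "a \<in> D v" "b \<notin> D v"
  shows "a = v \<and> v \<noteq> r \<and> b = par v"
proof -
  from edge_par[OF assms(1)] show ?thesis
  proof
    assume "b \<noteq> r \<and> par b = a"
    then have "pth r b = pth r a @ [b]" using par_pth by auto
    then show ?thesis using assms(2,3) by (auto simp: D_def)
  next
    assume h: "a \<noteq> r \<and> par a = b"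
    then have "pth r a = pth r b @ [a]" using par_pth by auto
    then have "a = v" using assms(2,3) by (auto simp: D_def)
    then show ?thesis using h by simp
  qed
qed

lemma subtree_pth:
  assumes "is_subtree UNIV E C" "r \<in> C" "v \<in> C"
  shows "set (pth r v) \<subseteq> C"
proof -
  obtain xs where "wk E xs" "xs \<noteq> []" "hd xs = r" "last xs = v" "set xs \<subseteq> C"
    using subtree_walk[OF assms] .
  then obtain p where "isp E r v p" "set p \<subseteq> C" using path_exists by metis
  then show ?thesis using pth_eq by simp
qed

lemma subtree_par: "is_subtree UNIV E C \<Longrightarrow> r \<in> C \<Longrightarrow> v \<in> C \<Longrightarrow> v \<noteq> r \<Longrightarrow> par v \<in> C"
  using subtree_pth[of C v] par_pth[of v] pth_simps(1,3)[of r "par v"] last_in_set by fastforce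

lemma tl_pth: "v \<noteq> r \<Longrightarrow> tl (pth r v) = tl (pth r (par v)) @ [v]"
  using par_pth[of v] pth_simps(1)[of r "par v"] by simp

lemma set_tl_pth_r [simp]: "set (tl (pth r r)) = {}" by simp

end

definition g :: "'v \<Rightarrow> 'v \<Rightarrow> real^'v \<Rightarrow> real^'v" where
  "g u v y = (\<chi> w. if w = u then y$v else if w = v then 0 else y$w)"

lemma g_nth [simp]: "g u v y $ w = (if w = u then y$v else if w = v then 0 else y$w)"
  by (simp add: g_def)

fun rc :: "'v list \<Rightarrow> real^'v \<Rightarrow> bool" where
  "rc (u # v # l) y = (0 \<le> y$v \<and> rc (v # l) (g u v y))"
| "rc _ y = True"

fun tr :: "'v list \<Rightarrow> real^'v \<Rightarrow> real^'v" where
  "tr (u # v # l) y = tr (v # l) (g u v y)"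
| "tr _ y = y"

lemma tr_last: "p \<noteq> [] \<Longrightarrow> y $ hd p = 0 \<Longrightarrow> tr p y $ last p = 0"
  by (induction p y rule: tr.induct) auto

lemma tr_out: "w \<notin> set p \<Longrightarrow> tr p y $ w = y $ w"
  by (induction p y rule: tr.induct) auto

lemma rc_tr_snoc:
  "p \<noteq> [] \<Longrightarrow> (rc (p @ [c]) y \<longleftrightarrow> rc p y \<and> 0 \<le> tr p y $ c) \<and> tr (p @ [c]) y = g (last p) c (tr p y)"
proof (induction p arbitrary: y)
  case (Cons u p)
  show ?case
  proof (cases p)
    case (Cons v l)
    then show ?thesis using Cons.IH[of "g u v y"] by simp
  qed simp
qed simp

lemma rc_iff: "distinct p \<Longrightarrow> rc p y \<longleftrightarrow> (\<forall>v\<in>set (tl p). 0 \<le> y $ v)"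
proof (induction p y rule: rc.induct)
  case (1 u v l y)
  then show ?case by auto
qed auto

lemma g_g: "x $ v = 0 \<Longrightarrow> g u v (g v u x) = x"
  by (simp add: vec_eq_iff)

lemma step_elim:
  assumes "((b, z), (c, w)) \<in> glue_step E \<union> (glue_step E)\<inverse>"
  shows "{b, c} \<in> E \<and> b \<noteq> c \<and> 0 \<le> z $ c \<and> z $ b = 0 \<and> w = g b c z"
  using assms unfolding glue_step_def
  by (auto simp: vec_eq_iff insert_commute)

lemma step_intro:
  "{u, v} \<in> E \<Longrightarrow> u \<noteq> v \<Longrightarrow> y $ u = 0 \<Longrightarrow> 0 \<le> y $ v \<Longrightarrow> ((u, y), (v, g u v y)) \<in> glue_step E"
  unfolding glue_step_def by auto

lemma walk_glue:
  "wk E p \<Longrightarrow> distinct p \<Longrightarrow> p \<noteq> [] \<Longrightarrow> y $ hd p = 0 \<Longrightarrow> rc p y \<Longrightarrow>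
   ((hd p, y), (last p, tr p y)) \<in> glue_rel E"
proof (induction p y rule: tr.induct)
  case (1 u v l y)
  have h: "{u, v} \<in> E" "wk E (v # l)" "u \<noteq> v" "distinct (v # l)" "y $ u = 0" "0 \<le> y $ v"
    "rc (v # l) (g u v y)"
    using "1.prems" by auto
  have "g u v y $ v = 0" using h by simp
  then have "((v, g u v y), (last (v # l), tr (v # l) (g u v y))) \<in> glue_rel E"
    using "1.IH" h by simp
  moreover have "((u, y), (v, g u v y)) \<in> glue_step E"
    using h by (intro step_intro)
  ultimately have "((u, y), (last (v # l), tr (v # l) (g u v y))) \<in> glue_rel E"
    unfolding glue_rel_def by (meson UnI1 converse_rtrancl_into_rtrancl)
  moreover have "last (u # v # l) = last (v # l)" by simp
  ultimately show ?case by simp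
qed (simp_all add: glue_rel_def)

context tree begin

lemma class_eq:
  assumes "y $ a = 0"
  shows "glue_rel E `` {(a, y)} = {(b, tr (pth a b) y) | b. rc (pth a b) y}"
proof
  show "{(b, tr (pth a b) y) | b. rc (pth a b) y} \<subseteq> glue_rel E `` {(a, y)}"
  proof
    fix q assume "q \<in> {(b, tr (pth a b) y) | b. rc (pth a b) y}"
    then obtain b where q: "q = (b, tr (pth a b) y)" "rc (pth a b) y" by blast
    then show "q \<in> glue_rel E `` {(a, y)}"
      using walk_glue[where p="pth a b" and y=y and E=E] pth_simps[of a b] assms by auto
  qed
next
  show "glue_rel E `` {(a, y)} \<subseteq> {(b, tr (pth a b) y) | b. rc (pth a b) y}"
  proof
    fix q assume "q \<in> glue_rel E `` {(a, y)}"
    then obtain b z where q: "q = (b, z)" "((a, y), (b, z)) \<in> glue_rel E" by (cases q) auto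
    have "\<exists>b'. (b, z) = (b', tr (pth a b') y) \<and> rc (pth a b') y"
      using q(2) unfolding glue_rel_def
    proof (induction "(b, z)" arbitrary: b z rule: rtrancl_induct)
      case base then show ?case by simp
    next
      case (step q b z)
      obtain b0 z0 where q: "q = (b0, z0)" by fastforce
      have IH: "z0 = tr (pth a b0) y" "rc (pth a b0) y" using step.hyps(3) q by auto
      have st: "{b0, b} \<in> E" "b0 \<noteq> b" "0 \<le> z0 $ b" "z0 $ b0 = 0" "z = g b0 b z0"
        using step_elim[of b0 z0 b z E] step.hyps(2) q by auto
      from edge_pth[OF st(1), of a] show ?case
      proof
        assume h: "pth a b = pth a b0 @ [b]"
        then show ?thesis using rc_tr_snoc[of "pth a b0" b y] pth_simps[of a b0] IH st by auto
      next
        assume h: "pth a b0 = pth a b @ [b0]"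
        have rc: "rc (pth a b) y" and z0: "z0 = g b b0 (tr (pth a b) y)"
          using rc_tr_snoc[of "pth a b" b0 y] pth_simps[of a b] IH h by auto
        have "tr (pth a b) y $ b = 0"
          using tr_last[of "pth a b" y] pth_simps[of a b] assms by simp
        then have "z = tr (pth a b) y" using st(5) z0 g_g by simp
        then show ?thesis using rc by auto
      qed
    qed
    then show "q \<in> {(b, tr (pth a b) y) | b. rc (pth a b) y}" using q by auto
  qed
qed

end

lemma cont_g: "continuous_on UNIV (g u v)"
proof -
  have "continuous_on UNIV (\<lambda>y::real^'a. \<chi> w. if w = u then y$v else if w = v then 0 else y$w)"
  proof (rule continuous_on_vec_lambda)
    fix w show "continuous_on UNIV (\<lambda>y::real^'a. if w = u then y$v else if w = v then 0 else y$w)"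
      by (cases "w = u"; cases "w = v") (auto intro: continuous_intros)
  qed
  then show ?thesis by (simp add: g_def[abs_def])
qed

lemma cont_tr: "continuous_on UNIV (tr p)"
proof (induction p rule: induct_list012)
  case (3 u v l)
  have "tr (u # v # l) = tr (v # l) \<circ> g u v" by (simp add: fun_eq_iff)
  then show ?case using 3(2) cont_g by (metis continuous_on_compose continuous_on_subset subset_UNIV)
qed (simp_all add: continuous_on_id')

lemma closed_rc: "closed {y. rc p y}"
proof (induction p rule: induct_list012)
  case (3 u v l)
  have "{y. rc (u # v # l) y} = {y. 0 \<le> y $ v} \<inter> g u v -` {y. rc (v # l) y}" by auto
  moreover have "closed {y::real^'a. 0 \<le> y $ v}"
    by (intro closed_Collect_le continuous_intros)
  moreover have "closed (g u v -` {y. rc (v # l) y})"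
    using closed_vimage[OF 3(2) cont_g] .
  ultimately show ?case by (metis closed_Int)
qed simp_all

lemma closed_H: "closed {y::real^'a. y $ a = 0}"
  by (intro closed_Collect_eq continuous_intros)

lemma equiv_glue: "equiv UNIV (glue_rel E)"
  unfolding glue_rel_def
  by (intro equivI refl_rtrancl sym_rtrancl trans_rtrancl) (auto simp: sym_def)

lemma chart_eq_iff_rel: "chart E b z = chart E a y \<longleftrightarrow> ((b, z), (a, y)) \<in> glue_rel E"
  unfolding chart_def using equiv_class_eq_iff[OF equiv_glue] by blast

lemma istop_LT: "istopology (\<lambda>U. U \<subseteq> LT E \<and>
     (\<forall>\<alpha>. openin (top_of_set {y. y $ \<alpha> = 0}) {y. y $ \<alpha> = 0 \<and> chart E \<alpha> y \<in> U}))"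
  unfolding istopology_def
proof safe
  fix S T a
  assume "\<forall>\<alpha>. openin (top_of_set {y. y $ \<alpha> = 0}) {y. y $ \<alpha> = 0 \<and> chart E \<alpha> y \<in> S}"
     "\<forall>\<alpha>. openin (top_of_set {y. y $ \<alpha> = 0}) {y. y $ \<alpha> = 0 \<and> chart E \<alpha> y \<in> T}"
  then have "openin (top_of_set {y. y $ a = 0})
    ({y. y $ a = 0 \<and> chart E a y \<in> S} \<inter> {y. y $ a = 0 \<and> chart E a y \<in> T})"
    by blast
  moreover have "{y. y $ a = 0 \<and> chart E a y \<in> S \<inter> T} =
     {y. y $ a = 0 \<and> chart E a y \<in> S} \<inter> {y. y $ a = 0 \<and> chart E a y \<in> T}" by auto
  ultimately show "openin (top_of_set {y. y $ a = 0}) {y. y $ a = 0 \<and> chart E a y \<in> S \<inter> T}"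
    by simp
next
  fix K a
  assume "\<forall>S\<in>K. S \<subseteq> LT E \<and> (\<forall>\<alpha>. openin (top_of_set {y. y $ \<alpha> = 0}) {y. y $ \<alpha> = 0 \<and> chart E \<alpha> y \<in> S})"
  then have "openin (top_of_set {y. y $ a = 0}) (\<Union>S\<in>K. {y. y $ a = 0 \<and> chart E a y \<in> S})"
    by blast
  moreover have "{y. y $ a = 0 \<and> chart E a y \<in> \<Union>K} = (\<Union>S\<in>K. {y. y $ a = 0 \<and> chart E a y \<in> S})"
    by auto
  ultimately show "openin (top_of_set {y. y $ a = 0}) {y. y $ a = 0 \<and> chart E a y \<in> \<Union>K}"
    by simp
qed auto

lemma openin_LT: "openin (LT_top E) U \<longleftrightarrow> U \<subseteq> LT E \<and>
     (\<forall>\<alpha>. openin (top_of_set {y. y $ \<alpha> = 0}) {y. y $ \<alpha> = 0 \<and> chart E \<alpha> y \<in> U})"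
  unfolding LT_top_def topology_inverse'[OF istop_LT] by (rule refl)

lemma chart_in_LT: "y $ a = 0 \<Longrightarrow> chart E a y \<in> LT E"
  unfolding LT_def chart_def raw_pts_def by (intro quotientI) simp

lemma topspace_LT: "topspace (LT_top E) = LT E"
proof -
  have "{y. y $ a = 0 \<and> chart E a y \<in> LT E} = {y. y $ a = 0}" for a
    using chart_in_LT by auto
  then have "openin (LT_top E) (LT E)"
    unfolding openin_LT by simp
  then show ?thesis
    using openin_subset[of "LT_top E"] openin_LT by (metis openin_topspace subset_antisym)
qed

lemma LT_elem: "x \<in> LT E \<Longrightarrow> \<exists>a y. y $ a = 0 \<and> x = chart E a y"
  unfolding LT_def chart_def raw_pts_def by (auto elim!: quotientE)

context tree begin

lemma mem_chart: "y $ a = 0 \<Longrightarrow> (b, z) \<in> chart E a y \<longleftrightarrow> rc (pth a b) y \<and> z = tr (pth a b) y"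
  unfolding chart_def using class_eq by auto

lemma chart_eq_iff: "y $ a = 0 \<Longrightarrow> z $ b = 0 \<Longrightarrow>
  chart E b z = chart E a y \<longleftrightarrow> rc (pth b a) z \<and> y = tr (pth b a) z"
  using chart_eq_iff_rel[where E=E and b=b and z=z and a=a and y=y] mem_chart[of z b a y] unfolding chart_def by simp

lemma chart_inj: "y $ a = 0 \<Longrightarrow> y' $ a = 0 \<Longrightarrow> chart E a y = chart E a y' \<Longrightarrow> y = y'"
  using chart_eq_iff[of y' a y a] by simp

lemma mem_chart_zero: "y $ a = 0 \<Longrightarrow> (b, z) \<in> chart E a y \<Longrightarrow> z $ b = 0"
  using mem_chart[of y a b z] tr_last[of "pth a b" y] pth_simps[of a b] by auto

lemma chart_of_mem: "y $ a = 0 \<Longrightarrow> (b, z) \<in> chart E a y \<Longrightarrow> chart E b z = chart E a y"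
  using chart_eq_iff_rel[where E=E and b=b and z=z and a=a and y=y] equiv_glue unfolding chart_def
  by (metis Image_singleton_iff equiv_class_eq_iff iso_tuple_UNIV_I)

lemma in_chart_chart: "y $ a = 0 \<Longrightarrow> in_chart b (chart E a y) \<longleftrightarrow> rc (pth a b) y"
  unfolding in_chart_def using mem_chart by auto

lemma coord_chart: "y $ a = 0 \<Longrightarrow> rc (pth a b) y \<Longrightarrow> coord (chart E a y) b c = tr (pth a b) y $ c"
  unfolding coord_def using mem_chart[of y a b] by simp

lemma cont_chart: "continuous_map (top_of_set {y. y $ a = 0}) (LT_top E) (chart E a)"
  unfolding continuous_map_def topspace_LT using chart_in_LT
  by (auto simp: openin_LT Collect_conj_eq[symmetric])

lemma closed_chart: "closed_map (top_of_set {y. y $ a = 0}) (LT_top E) (chart E a)"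
  unfolding closed_map_def
proof clarify
  fix K :: "(real^'v) set" assume K: "closedin (top_of_set {y. y $ a = 0}) K"
  have Kc: "closed K" "K \<subseteq> {y. y $ a = 0}"
    using closedin_closed_eq[OF closed_H[of a], of K] K closedin_subset[OF K] by auto
  have sub: "chart E a ` K \<subseteq> LT E" using Kc chart_in_LT by auto
  have "openin (LT_top E) (LT E - chart E a ` K)"
    unfolding openin_LT
  proof safe
    fix b
    define M where "M = {z. z $ b = 0} \<inter> {z. rc (pth b a) z} \<inter> tr (pth b a) -` K"
    have M: "{z. z $ b = 0 \<and> chart E b z \<in> LT E - chart E a ` K} = {z. z $ b = 0} - M"
    proof -
      have "z \<in> M \<longleftrightarrow> z $ b = 0 \<and> chart E b z \<in> chart E a ` K" if "z $ b = 0" for z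
      proof
        assume "z \<in> M"
        then have "chart E b z = chart E a (tr (pth b a) z)"
          using chart_eq_iff[of "tr (pth b a) z" a z b] that Kc unfolding M_def by auto
        then show "z $ b = 0 \<and> chart E b z \<in> chart E a ` K" using that \<open>z \<in> M\<close> M_def by auto
      next
        assume "z $ b = 0 \<and> chart E b z \<in> chart E a ` K"
        then obtain y where "y \<in> K" "chart E b z = chart E a y" by auto
        then show "z \<in> M" using chart_eq_iff[of y a z b] that Kc unfolding M_def by auto
      qed
      then show ?thesis using chart_in_LT by auto
    qed
    have "closed M" unfolding M_def
      by (intro closed_Int closed_H closed_rc closed_vimage[OF Kc(1) cont_tr])
    then have "closedin (top_of_set {z. z $ b = (0::real)}) M"
      using closedin_closed_eq[OF closed_H[of b], of M] M_def by blast
    then show "openin (top_of_set {y. y $ b = 0}) {z. z $ b = 0 \<and> chart E b z \<in> LT E - chart E a ` K}"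
      unfolding M by (simp add: openin_diff)
  qed
  then show "closedin (LT_top E) (chart E a ` K)"
    unfolding closedin_def topspace_LT using sub by simp
qed

end

context tree begin

lemma chart_hom:
  assumes A: "A \<subseteq> {y. y $ a = 0}"
  shows "homeomorphic_map (top_of_set A) (subtopology (LT_top E) (chart E a ` A)) (chart E a)"
proof -
  define H where "H = {y::real^'v. y $ a = 0}"
  have im: "chart E a ` H \<subseteq> LT E" using chart_in_LT H_def by auto
  have hm: "homeomorphic_map (top_of_set H) (subtopology (LT_top E) (chart E a ` H)) (chart E a)"
  proof (rule bijective_closed_imp_homeomorphic_map)
    show "continuous_map (top_of_set H) (subtopology (LT_top E) (chart E a ` H)) (chart E a)"
      using cont_chart[of a] unfolding H_def by (auto simp: continuous_map_in_subtopology)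
    show "closed_map (top_of_set H) (subtopology (LT_top E) (chart E a ` H)) (chart E a)"
      using closed_chart[of a] unfolding H_def by (intro closed_map_into_subtopology) auto
    show "chart E a ` topspace (top_of_set H) = topspace (subtopology (LT_top E) (chart E a ` H))"
      using im by (auto simp: topspace_LT)
    show "inj_on (chart E a) (topspace (top_of_set H))"
      using chart_inj unfolding H_def by (auto intro: inj_onI)
  qed
  have "homeomorphic_map (subtopology (top_of_set H) A)
          (subtopology (subtopology (LT_top E) (chart E a ` H)) (chart E a ` A)) (chart E a)"
    by (rule homeomorphic_map_subtopologies[OF hm]) (use A im in \<open>auto simp: H_def topspace_LT\<close>)
  moreover have "subtopology (top_of_set H) A = top_of_set A"
    using A by (simp add: subtopology_subtopology H_def Int_absorb1)
  moreover have "subtopology (subtopology (LT_top E) (chart E a ` H)) (chart E a ` A)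
      = subtopology (LT_top E) (chart E a ` A)"
    using A by (simp add: subtopology_subtopology H_def Int_absorb1 image_mono)
  ultimately show ?thesis by simp
qed

lemma chart_closure:
  assumes A: "A \<subseteq> {y. y $ a = 0}"
  shows "(LT_top E) closure_of (chart E a ` A) = chart E a ` closure A"
proof
  have cA: "closure A \<subseteq> {y. y $ a = 0}" using closure_minimal[OF A closed_H] .
  have "closedin (top_of_set {y. y $ a = 0}) (closure A)"
    using closedin_closed_eq[OF closed_H[of a], of "closure A"] cA by simp
  then have "closedin (LT_top E) (chart E a ` closure A)"
    using closed_chart[of a] unfolding closed_map_def by blast
  then show "(LT_top E) closure_of (chart E a ` A) \<subseteq> chart E a ` closure A"
    using closure_of_minimal[where X="LT_top E" and T="chart E a ` closure A" and S="chart E a ` A"] closure_subset[of A]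
    by blast
next
  have "top_of_set {y. y $ a = 0} closure_of A = {y. y $ a = 0} \<inter> closure A"
    using A by (simp add: closure_of_subtopology Int_absorb1)
  also have "\<dots> = closure A" using closure_minimal[OF A closed_H] by blast
  finally show "chart E a ` closure A \<subseteq> (LT_top E) closure_of (chart E a ` A)"
    using continuous_map_image_closure_subset[OF cont_chart[of a], of A] by simp
qed

end

locale cellsetup = rtree E r for E :: "'v::finite set set" and r :: 'v +
  fixes S :: "'v set" and P :: "'v set set"
  assumes corr: "(S, P) \<in> corresp E" and rS: "r \<in> S"
begin

lemma S_sub: "is_subtree UNIV E S" and UP: "\<Union>P = S" and P_sub: "\<And>C. C \<in> P \<Longrightarrow> is_subtree UNIV E C"
  and P_disj: "\<And>C C'. C \<in> P \<Longrightarrow> C' \<in> P \<Longrightarrow> C \<noteq> C' \<Longrightarrow> C \<inter> C' = {}"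
  using corr unfolding corresp_def by auto

lemma P_ne: "C \<in> P \<Longrightarrow> C \<noteq> {}"
  using P_sub unfolding is_subtree_def is_tree_def by blast

lemma P_eq: "C \<in> P \<Longrightarrow> C' \<in> P \<Longrightarrow> u \<in> C \<Longrightarrow> u \<in> C' \<Longrightarrow> C = C'"
  using P_disj by blast

definition blk :: "'v \<Rightarrow> 'v set" where "blk u = (THE C. C \<in> P \<and> u \<in> C)"

lemma blk: "u \<in> S \<Longrightarrow> blk u \<in> P \<and> u \<in> blk u"
proof -
  assume "u \<in> S"
  then obtain C where "C \<in> P" "u \<in> C" using UP by blast
  moreover have "(THE C. C \<in> P \<and> u \<in> C) = C"
    by (rule the_equality) (use calculation P_eq in blast)+
  ultimately show ?thesis unfolding blk_def by simp
qed

lemma blk_eq: "C \<in> P \<Longrightarrow> u \<in> C \<Longrightarrow> blk u = C"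
  using blk[of u] UP P_eq by blast

definition sb :: "'v \<Rightarrow> 'v \<Rightarrow> bool" where "sb u v \<longleftrightarrow> (\<exists>C\<in>P. u \<in> C \<and> v \<in> C)"

lemma sb_sym: "sb u v \<longleftrightarrow> sb v u" unfolding sb_def by blast

lemma par_S: "v \<in> S \<Longrightarrow> v \<noteq> r \<Longrightarrow> par v \<in> S"
  using subtree_par[OF S_sub rS] .

definition Xs where "Xs = {c. c \<noteq> r \<and> c \<in> S \<and> \<not> sb (par c) c}"
definition Is where "Is = {c. c \<noteq> r \<and> c \<in> S \<and> sb (par c) c}"
definition Os where "Os = {c. c \<noteq> r \<and> c \<notin> S \<and> par c \<in> S}"

definition Acell :: "(real^'v) set" where
  "Acell = {y. y $ r = 0 \<and> (\<forall>c\<in>Xs. y $ c = 0) \<and> (\<forall>c\<in>Is. 0 < y $ c) \<and> (\<forall>c\<in>Os. y $ c < 0)}"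

lemma edge_F:
  assumes Fsym: "\<And>a b. (a, b) \<in> F \<Longrightarrow> (b, a) \<in> F"
    and H: "\<forall>c. c \<noteq> r \<and> c \<in> S \<longrightarrow> ((par c, c) \<in> F \<longleftrightarrow> sb (par c) c)"
    and e: "{a, b} \<in> E" "a \<in> S" "b \<in> S"
  shows "(a, b) \<in> F \<longleftrightarrow> sb a b"
  using edge_par[OF e(1)]
proof
  assume "b \<noteq> r \<and> par b = a" then show ?thesis using H e by auto
next
  assume "a \<noteq> r \<and> par a = b" then show ?thesis using H e Fsym sb_sym by blast
qed

lemma quot_lemma:
  assumes Fsub: "F \<subseteq> S \<times> S" and Fsym: "\<And>a b. (a, b) \<in> F \<Longrightarrow> (b, a) \<in> F"
    and Fedge: "\<And>a b. (a, b) \<in> F \<Longrightarrow> {a, b} \<in> E"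
  shows "S // (F\<^sup>* \<inter> S \<times> S) = P \<longleftrightarrow> (\<forall>c. c \<noteq> r \<and> c \<in> S \<longrightarrow> ((par c, c) \<in> F \<longleftrightarrow> sb (par c) c))"
    (is "S // ?R = P \<longleftrightarrow> ?H")
proof
  assume H: ?H
  have cls: "?R `` {u} = C" if CP: "C \<in> P" and uC: "u \<in> C" for u C
  proof
    have uS: "u \<in> S" using that UP by blast
    show "?R `` {u} \<subseteq> C"
    proof
      fix w assume "w \<in> ?R `` {u}"
      then have "(u, w) \<in> F\<^sup>*" by blast
      then show "w \<in> C"
      proof (induction rule: rtrancl_induct)
        case base then show ?case using that by simp
      next
        case (step w w')
        have "w \<in> S" "w' \<in> S" using step.hyps(2) Fsub by auto
        then have "sb w w'" using edge_F[OF Fsym H Fedge[OF step.hyps(2)]] step.hyps(2) by blast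
        then obtain C' where "C' \<in> P" "w \<in> C'" "w' \<in> C'" unfolding sb_def by blast
        then show ?case using P_eq[OF that(1) \<open>C' \<in> P\<close>] step.IH by blast
      qed
    qed
    show "C \<subseteq> ?R `` {u}"
    proof
      fix w assume "w \<in> C"
      then obtain xs where xs: "wk E xs" "xs \<noteq> []" "hd xs = u" "last xs = w" "set xs \<subseteq> C"
        using subtree_walk[OF P_sub[OF CP] uC] by metis
      have CS: "C \<subseteq> S" using that(1) UP by blast
      have "(u, w) \<in> F\<^sup>*"
        using wk_rtrancl[OF xs(1,2,5), of F] xs(3,4)
          edge_F[OF Fsym H] CS that(1) unfolding sb_def by blast
      then show "w \<in> ?R `` {u}" using \<open>w \<in> C\<close> CS uS by blast
    qed
  qed
  show "S // ?R = P"
  proof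
    show "S // ?R \<subseteq> P"
    proof
      fix X assume "X \<in> S // ?R"
      then obtain u where "u \<in> S" "X = ?R `` {u}" by (auto elim!: quotientE)
      then show "X \<in> P" using cls[of "blk u" u] blk[of u] by auto
    qed
    show "P \<subseteq> S // ?R"
    proof
      fix C assume "C \<in> P"
      then obtain u where "u \<in> C" using P_ne by blast
      then have "C = ?R `` {u}" "u \<in> S" using cls \<open>C \<in> P\<close> UP by auto
      then show "C \<in> S // ?R" by (auto intro: quotientI)
    qed
  qed
next
  assume Q: "S // ?R = P"
  have Rsym: "(a, b) \<in> F\<^sup>* \<Longrightarrow> (b, a) \<in> F\<^sup>*" for a b
  proof -
    have "sym F" using Fsym by (auto simp: sym_def)
    then have "sym (F\<^sup>*)" by (rule sym_rtrancl)
    then show "(a, b) \<in> F\<^sup>* \<Longrightarrow> (b, a) \<in> F\<^sup>*" by (meson symD)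
  qed
  show ?H
  proof (intro allI impI)
    fix c assume c: "c \<noteq> r \<and> c \<in> S"
    have pc: "par c \<in> S" using par_S c by blast
    define X where "X = ?R `` {par c}"
    show "(par c, c) \<in> F \<longleftrightarrow> sb (par c) c"
    proof
      assume "(par c, c) \<in> F"
      then have "c \<in> X" using pc c unfolding X_def by blast
      moreover have "par c \<in> X" using pc unfolding X_def by blast
      moreover have "X \<in> P" using Q pc unfolding X_def by (auto intro: quotientI)
      ultimately show "sb (par c) c" unfolding sb_def by (intro bexI[of _ X]) auto
    next
      assume "sb (par c) c"
      then obtain C where C: "C \<in> P" "par c \<in> C" "c \<in> C" unfolding sb_def by blast
      have "C \<in> S // ?R" using Q C(1) by simp
      then obtain u where u: "C = ?R `` {u}" by (rule quotientE)
      have "(u, par c) \<in> F\<^sup>*" "(u, c) \<in> F\<^sup>*" using C(2,3) unfolding u by auto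
      then have pcc: "(par c, c) \<in> F\<^sup>*" using Rsym rtrancl_trans by metis
      have "(par c, b) \<in> F\<^sup>* \<Longrightarrow> b \<notin> D c \<or> (par c, c) \<in> F \<or> (c, par c) \<in> F" for b
      proof (induction rule: rtrancl_induct)
        case base then show ?case using par_notin_D c by blast
      next
        case (step b b')
        show ?case
        proof (cases "b \<notin> D c \<and> b' \<in> D c")
          case True
          have "{b', b} \<in> E" using Fedge[OF step.hyps(2)] by (simp add: insert_commute)
          then have "b' = c \<and> b = par c" using desc_edge True by blast
          then show ?thesis using step.hyps(2) by simp
        next
          case False
          then show ?thesis using step.IH by blast
        qed
      qed
      from this[OF pcc] D_self[of c] show "(par c, c) \<in> F" using Fsym by blast
    qed
  qed
qed

end

context cellsetup begin

definition Sy :: "real^'v \<Rightarrow> 'v set" where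
  "Sy y = {b. \<forall>v\<in>set (tl (pth r b)). 0 \<le> y $ v}"

lemma S_of_chart: "y $ r = 0 \<Longrightarrow> S_of (chart E r y) = Sy y"
proof -
  assume y: "y $ r = 0"
  have "rc (pth r b) y \<longleftrightarrow> (\<forall>v\<in>set (tl (pth r b)). 0 \<le> y $ v)" for b
    using rc_iff pth_simps(4) by blast
  then show ?thesis unfolding S_of_def Sy_def using in_chart_chart[OF y] by simp
qed

lemma Sy_r: "r \<in> Sy y" by (simp add: Sy_def)

lemma Sy_rec: "b \<noteq> r \<Longrightarrow> b \<in> Sy y \<longleftrightarrow> par b \<in> Sy y \<and> 0 \<le> y $ b"
  unfolding Sy_def using tl_pth[of b] by auto

lemma par_par: "c \<noteq> r \<Longrightarrow> par c \<noteq> r \<Longrightarrow> par (par c) \<noteq> c"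
  using par_len[of c] par_len[of "par c"] by auto

lemma Sy_eq: "Sy y = S \<longleftrightarrow> (\<forall>c. c \<noteq> r \<and> par c \<in> S \<longrightarrow> (c \<in> S \<longleftrightarrow> 0 \<le> y $ c))"
proof
  assume h: "Sy y = S"
  show "\<forall>c. c \<noteq> r \<and> par c \<in> S \<longrightarrow> (c \<in> S \<longleftrightarrow> 0 \<le> y $ c)"
    using Sy_rec[of _ y] h by auto
next
  assume h: "\<forall>c. c \<noteq> r \<and> par c \<in> S \<longrightarrow> (c \<in> S \<longleftrightarrow> 0 \<le> y $ c)"
  have "b \<in> Sy y \<longleftrightarrow> b \<in> S" for b
  proof (induction b rule: par_induct)
    case 1 then show ?case using Sy_r rS by simp
  next
    case (2 c)
    then show ?case using Sy_rec[of c y] h par_S[of c] by blast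
  qed
  then show "Sy y = S" by blast
qed

definition Fy :: "real^'v \<Rightarrow> ('v \<times> 'v) set" where
  "Fy y = {(b, c). b \<in> S \<and> c \<in> S \<and> ((c \<noteq> r \<and> par c = b \<and> 0 < y $ c) \<or> (b \<noteq> r \<and> par b = c \<and> 0 < y $ b))}"

lemma coord_child:
  assumes y: "y $ r = 0" and Sy: "Sy y = S" and c: "c \<noteq> r" "c \<in> S"
  shows "coord (chart E r y) (par c) c = y $ c \<and> coord (chart E r y) c (par c) = y $ c"
proof -
  have pc: "par c \<in> S" using par_S c by blast
  have rcb: "rc (pth r (par c)) y" using pc Sy S_of_chart[OF y] in_chart_chart[OF y]
    unfolding S_of_def by auto
  have rcc: "rc (pth r c) y" using c Sy S_of_chart[OF y] in_chart_chart[OF y]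
    unfolding S_of_def by auto
  have pp: "pth r c = pth r (par c) @ [c]" using par_pth c by blast
  have cn: "c \<notin> set (pth r (par c))" using pth_simps(4)[of r c] pp by auto
  have 1: "coord (chart E r y) (par c) c = y $ c"
    using coord_chart[OF y rcb] tr_out[OF cn] by simp
  have "tr (pth r c) y = g (par c) c (tr (pth r (par c)) y)"
    using rc_tr_snoc[of "pth r (par c)" c y] pp pth_simps(1,3)[of r "par c"] by simp
  then have "coord (chart E r y) c (par c) = tr (pth r (par c)) y $ c"
    using coord_chart[OF y rcc] by simp
  then show ?thesis using 1 tr_out[OF cn] by simp
qed

lemma contracted_eq:
  assumes y: "y $ r = 0" and Sy: "Sy y = S"
  shows "contracted E (chart E r y) = Fy y"
proof -
  have SS: "S_of (chart E r y) = S" using S_of_chart[OF y] Sy by simp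
  show ?thesis
  proof (intro set_eqI iffI)
    fix q assume "q \<in> contracted E (chart E r y)"
    then obtain b c where q: "q = (b, c)" "{b, c} \<in> E" "b \<in> S" "c \<in> S"
      "coord (chart E r y) b c = coord (chart E r y) c b" "0 < coord (chart E r y) b c"
      unfolding contracted_def induced_def SS by auto
    from edge_par[OF q(2)] show "q \<in> Fy y"
    proof
      assume h: "c \<noteq> r \<and> par c = b"
      then show ?thesis using coord_child[OF y Sy, of c] q unfolding Fy_def by auto
    next
      assume h: "b \<noteq> r \<and> par b = c"
      then show ?thesis using coord_child[OF y Sy, of b] q unfolding Fy_def by auto
    qed
  next
    fix q assume "q \<in> Fy y"
    then obtain b c where q: "q = (b, c)" "b \<in> S" "c \<in> S"
      "(c \<noteq> r \<and> par c = b \<and> 0 < y $ c) \<or> (b \<noteq> r \<and> par b = c \<and> 0 < y $ b)"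
      unfolding Fy_def by auto
    from q(4) show "q \<in> contracted E (chart E r y)"
    proof
      assume h: "c \<noteq> r \<and> par c = b \<and> 0 < y $ c"
      then have "{b, c} \<in> E" using par_edge by blast
      then show ?thesis using coord_child[OF y Sy, of c] q h
        unfolding contracted_def induced_def SS by auto
    next
      assume h: "b \<noteq> r \<and> par b = c \<and> 0 < y $ b"
      then have "{b, c} \<in> E" using par_edge by (metis insert_commute)
      then show ?thesis using coord_child[OF y Sy, of b] q h
        unfolding contracted_def induced_def SS by auto
    qed
  qed
qed

lemma Fy_props: "Fy y \<subseteq> S \<times> S" "(a, b) \<in> Fy y \<Longrightarrow> (b, a) \<in> Fy y" "(a, b) \<in> Fy y \<Longrightarrow> {a, b} \<in> E"
  unfolding Fy_def using par_edge by (auto simp: insert_commute)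

lemma Fy_par: "c \<noteq> r \<Longrightarrow> c \<in> S \<Longrightarrow> (par c, c) \<in> Fy y \<longleftrightarrow> 0 < y $ c"
  unfolding Fy_def using par_S par_par by auto

lemma iff_cong_all: "(\<forall>c. Q c \<longrightarrow> (A c \<longleftrightarrow> B c)) \<Longrightarrow>
   (\<forall>c. Q c \<longrightarrow> (A c \<longleftrightarrow> C c)) \<longleftrightarrow> (\<forall>c. Q c \<longrightarrow> (B c \<longleftrightarrow> C c))"
  by blast

lemma cell_iff:
  assumes y: "y $ r = 0"
  shows "(S_of (chart E r y) = S \<and> P_of E (chart E r y) = P) \<longleftrightarrow> y \<in> Acell"
proof -
  have "(S_of (chart E r y) = S \<and> P_of E (chart E r y) = P) \<longleftrightarrow>
     Sy y = S \<and> (\<forall>c. c \<noteq> r \<and> c \<in> S \<longrightarrow> (0 < y $ c \<longleftrightarrow> sb (par c) c))"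
  proof (cases "Sy y = S")
    case True
    have "Fy y \<union> (Fy y)\<inverse> = Fy y" using Fy_props(2) by auto
    then have P1: "P_of E (chart E r y) = S // ((Fy y)\<^sup>* \<inter> S \<times> S)"
      unfolding P_of_def using contracted_eq[OF y True] S_of_chart[OF y] True by simp
    have P2: "S // ((Fy y)\<^sup>* \<inter> S \<times> S) = P \<longleftrightarrow>
       (\<forall>c. c \<noteq> r \<and> c \<in> S \<longrightarrow> ((par c, c) \<in> Fy y \<longleftrightarrow> sb (par c) c))"
      by (rule quot_lemma[OF Fy_props(1)]) (use Fy_props(2,3) in blast)+
    have P3: "\<forall>c. c \<noteq> r \<and> c \<in> S \<longrightarrow> ((par c, c) \<in> Fy y \<longleftrightarrow> 0 < y $ c)"
      using Fy_par by blast
    show ?thesis using P1 P2 iff_cong_all[OF P3] True S_of_chart[OF y] by simp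
  next
    case False then show ?thesis using S_of_chart[OF y] by simp
  qed
  also have "\<dots> \<longleftrightarrow> y \<in> Acell"
  proof
    assume h: "Sy y = S \<and> (\<forall>c. c \<noteq> r \<and> c \<in> S \<longrightarrow> (0 < y $ c \<longleftrightarrow> sb (par c) c))"
    then have h1: "\<forall>c. c \<noteq> r \<and> par c \<in> S \<longrightarrow> (c \<in> S \<longleftrightarrow> 0 \<le> y $ c)" using Sy_eq by blast
    have "\<forall>c\<in>Xs. y $ c = 0"
    proof
      fix c assume "c \<in> Xs"
      then have "c \<noteq> r" "c \<in> S" "\<not> sb (par c) c" "par c \<in> S" unfolding Xs_def using par_S by auto
      then show "y $ c = 0" using h h1 by force
    qed
    moreover have "\<forall>c\<in>Is. 0 < y $ c" using h unfolding Is_def by blast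
    moreover have "\<forall>c\<in>Os. y $ c < 0" using h1 unfolding Os_def by (auto simp: not_le[symmetric])
    ultimately show "y \<in> Acell" unfolding Acell_def using y by blast
  next
    assume A: "y \<in> Acell"
    have "\<forall>c. c \<noteq> r \<and> par c \<in> S \<longrightarrow> (c \<in> S \<longleftrightarrow> 0 \<le> y $ c)"
    proof (intro allI impI)
      fix c assume c: "c \<noteq> r \<and> par c \<in> S"
      show "c \<in> S \<longleftrightarrow> 0 \<le> y $ c"
      proof (cases "c \<in> S")
        case True
        then have "c \<in> Xs \<or> c \<in> Is" unfolding Xs_def Is_def using c by auto
        then show ?thesis using A True unfolding Acell_def by force
      next
        case False
        then have "c \<in> Os" unfolding Os_def using c by auto
        then show ?thesis using A False unfolding Acell_def by force
      qed
    qed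
    moreover have "\<forall>c. c \<noteq> r \<and> c \<in> S \<longrightarrow> (0 < y $ c \<longleftrightarrow> sb (par c) c)"
    proof (intro allI impI)
      fix c assume c: "c \<noteq> r \<and> c \<in> S"
      show "0 < y $ c \<longleftrightarrow> sb (par c) c"
      proof (cases "sb (par c) c")
        case True
        then have "c \<in> Is" unfolding Is_def using c by auto
        then show ?thesis using A True unfolding Acell_def by force
      next
        case False
        then have "c \<in> Xs" unfolding Xs_def using c by auto
        then show ?thesis using A False unfolding Acell_def by force
      qed
    qed
    ultimately show "Sy y = S \<and> (\<forall>c. c \<noteq> r \<and> c \<in> S \<longrightarrow> (0 < y $ c \<longleftrightarrow> sb (par c) c))"
      using Sy_eq by blast
  qed
  finally show ?thesis .
qed

end

context cellsetup begin

lemma D_len: "c' \<in> D c \<Longrightarrow> length (pth r c) \<le> length (pth r c')"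
proof -
  assume "c' \<in> D c"
  then obtain p1 p2 where h: "pth r c' = p1 @ c # p2" unfolding D_def by (meson mem_Collect_eq split_list)
  then show ?thesis using pth_prefix[OF h] by simp
qed

lemma D_antisym: "c' \<in> D c \<Longrightarrow> c \<in> D c' \<Longrightarrow> c = c'"
proof -
  assume a: "c' \<in> D c" "c \<in> D c'"
  then obtain p1 p2 where h: "pth r c' = p1 @ c # p2" unfolding D_def by (meson mem_Collect_eq split_list)
  have "length (pth r c) = length (pth r c')" using D_len a by (meson le_antisym)
  then have "p2 = []" using pth_prefix[OF h] h by simp
  then show "c = c'" using h pth_simps(3)[of r c'] by simp
qed

lemma Xs_D:
  assumes c: "c \<in> Xs" and C: "C \<in> P" "c \<in> C" "c' \<in> C"
  shows "c' \<in> D c"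
proof -
  obtain xs where xs: "wk E xs" "xs \<noteq> []" "hd xs = c" "last xs = c'" "set xs \<subseteq> C"
    using subtree_walk[OF P_sub[OF C(1)] C(2,3)] by metis
  define F where "F = {(a, b). a \<in> D c \<longrightarrow> b \<in> D c}"
  have "(a, b) \<in> F" if "{a, b} \<in> E" "a \<in> C" "b \<in> C" for a b
  proof -
    have "a \<in> D c \<Longrightarrow> b \<notin> D c \<Longrightarrow> False"
    proof -
      assume "a \<in> D c" "b \<notin> D c"
      then have "b = par c" using desc_edge that(1) by blast
      then have "sb (par c) c" unfolding sb_def using C that(3) by blast
      then show False using c unfolding Xs_def by blast
    qed
    then show ?thesis unfolding F_def by blast
  qed
  then have "(c, c') \<in> F\<^sup>*" using wk_rtrancl[OF xs(1,2,5), of F] xs(3,4) by blast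
  then have "(c, c') \<in> F"
    by (induction rule: rtrancl_induct) (auto simp: F_def)
  then show ?thesis using D_self unfolding F_def by blast
qed

lemma blk_inj: "inj_on blk Xs"
proof (rule inj_onI)
  fix c c' assume c: "c \<in> Xs" "c' \<in> Xs" "blk c = blk c'"
  have S: "c \<in> S" "c' \<in> S" using c unfolding Xs_def by auto
  have "c' \<in> D c" using Xs_D[OF c(1) _ _ ] blk[OF S(1)] blk[OF S(2)] c(3) by metis
  moreover have "c \<in> D c'" using Xs_D[OF c(2) _ _ ] blk[OF S(1)] blk[OF S(2)] c(3) by metis
  ultimately show "c = c'" using D_antisym by blast
qed

lemma blk_img: "blk ` Xs = P - {blk r}"
proof
  show "blk ` Xs \<subseteq> P - {blk r}"
  proof
    fix C assume "C \<in> blk ` Xs"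
    then obtain c where c: "c \<in> Xs" "C = blk c" by blast
    then have cS: "c \<in> S" "c \<noteq> r" unfolding Xs_def by auto
    have "C \<noteq> blk r"
    proof
      assume "C = blk r"
      then have "r \<in> C" "c \<in> C" "C \<in> P" using blk[OF rS] blk[OF cS(1)] c(2) by auto
      then have "par c \<in> C" using subtree_par[OF P_sub] cS by blast
      then have "sb (par c) c" unfolding sb_def using \<open>c \<in> C\<close> \<open>C \<in> P\<close> by blast
      then show False using c(1) unfolding Xs_def by blast
    qed
    then show "C \<in> P - {blk r}" using blk[OF cS(1)] c(2) by auto
  qed
next
  show "P - {blk r} \<subseteq> blk ` Xs"
  proof
    fix C assume C: "C \<in> P - {blk r}"
    then obtain u where "u \<in> C" using P_ne by blast
    then obtain v where v: "v \<in> C" "\<forall>w. w \<in> C \<longrightarrow> length (pth r v) \<le> length (pth r w)"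
      using ex_has_least_nat[of "\<lambda>w. w \<in> C" u "\<lambda>w. length (pth r w)"] by blast
    have vS: "v \<in> S" using v(1) C UP by blast
    have "v \<noteq> r" using v(1) C blk_eq[of C v] by auto
    have "\<not> sb (par v) v"
    proof
      assume "sb (par v) v"
      then obtain C' where "C' \<in> P" "par v \<in> C'" "v \<in> C'" unfolding sb_def by blast
      then have "par v \<in> C" using P_eq[of C C' v] C v(1) by blast
      then show False using v(2) par_len[OF \<open>v \<noteq> r\<close>] by fastforce
    qed
    then have "v \<in> Xs" unfolding Xs_def using vS \<open>v \<noteq> r\<close> by blast
    moreover have "blk v = C" using blk_eq C v(1) by blast
    ultimately show "C \<in> blk ` Xs" by blast
  qed
qed

lemma card_P: "card P = Suc (card Xs)"
proof -
  have fP: "finite P" by simp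
  have "card Xs = card (P - {blk r})" using card_image[OF blk_inj] blk_img by simp
  also have "\<dots> = card P - 1" using blk[OF rS] fP by (simp add: card_Diff_singleton)
  finally have "card Xs = card P - 1" .
  moreover have "card P > 0" using blk[OF rS] fP card_gt_0_iff by blast
  ultimately show ?thesis by simp
qed

end

lemma cmap_vec:
  assumes "\<And>c. continuous_map X euclideanreal (\<lambda>x. f x $ c)"
  shows "continuous_map X euclidean (f :: _ \<Rightarrow> real^'v::finite)"
  unfolding continuous_map_atin
proof
  fix x assume x: "x \<in> topspace X"
  have "\<forall>c. limitin euclideanreal (\<lambda>x. f x $ c) (f x $ c) (atin X x)"
    using assms x unfolding continuous_map_atin by blast
  then have "\<forall>c. ((\<lambda>x. f x $ c) \<longlongrightarrow> f x $ c) (atin X x)" by simp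
  then have "(f \<longlongrightarrow> f x) (atin X x)" by (intro vec_tendstoI) blast
  then show "limitin euclidean f (f x) (atin X x)" by simp
qed

locale geo =
  fixes Z Pos Neg :: "'v::finite set"
  assumes dZP: "Z \<inter> Pos = {}" and dZN: "Z \<inter> Neg = {}" and dPN: "Pos \<inter> Neg = {}"
begin

definition A :: "(real^'v) set" where
  "A = {y. (\<forall>c\<in>Z. y $ c = 0) \<and> (\<forall>c\<in>Pos. 0 < y $ c) \<and> (\<forall>c\<in>Neg. y $ c < 0)}"

definition Q :: "(real^'v) set" where
  "Q = {y. (\<forall>c\<in>Z. y $ c = 0) \<and> (\<forall>c\<in>Pos. 0 \<le> y $ c) \<and> (\<forall>c\<in>Neg. y $ c \<le> 0)}"

definition a0 :: "real^'v" where
  "a0 = (\<chi> c. if c \<in> Pos then 1 else if c \<in> Neg then -1 else 0)"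

lemma a0A: "a0 \<in> A"
  unfolding A_def a0_def using dZP dZN dPN by auto

lemma closed_Q: "closed Q"
proof -
  have "Q = (\<Inter>c\<in>Z. {y. y $ c = 0}) \<inter> (\<Inter>c\<in>Pos. {y. 0 \<le> y $ c}) \<inter> (\<Inter>c\<in>Neg. {y. y $ c \<le> 0})"
    unfolding Q_def by auto
  moreover have "closed {y::real^'v. y $ c = 0}" "closed {y::real^'v. 0 \<le> y $ c}" "closed {y::real^'v. y $ c \<le> 0}" for c
    by (intro closed_Collect_eq closed_Collect_le continuous_intros)+
  ultimately show ?thesis by (simp add: closed_INT closed_Int)
qed

lemma closure_A: "closure A = Q"
proof
  show "closure A \<subseteq> Q" using closed_Q by (rule closure_minimal[rotated]) (auto simp: A_def Q_def)
next
  show "Q \<subseteq> closure A"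
  proof
    fix y assume y: "y \<in> Q"
    show "y \<in> closure A" unfolding closure_approachable
    proof (intro allI impI)
      fix e :: real assume e: "0 < e"
      define t where "t = e / (2 * (norm a0 + 1))"
      have "0 < 2 * (norm a0 + 1)" by (simp add: add_nonneg_pos)
      then have t: "0 < t" using e unfolding t_def by (intro divide_pos_pos)
      have "y + t *\<^sub>R a0 \<in> A"
        using y t a0A unfolding A_def Q_def by (auto simp: add_nonneg_pos add_nonpos_neg mult_pos_neg)
      moreover have "dist (y + t *\<^sub>R a0) y < e"
      proof -
        have "dist (y + t *\<^sub>R a0) y = t * norm a0" using t by (simp add: dist_norm)
        also have "\<dots> < e"
        proof -
          have "t * norm a0 = e * (norm a0 / (2 * (norm a0 + 1)))" by (simp add: t_def)
          also have "\<dots> < e * 1"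
            using e by (intro mult_strict_left_mono) (auto simp: divide_less_eq add_nonneg_pos)
          finally show ?thesis by simp
        qed
        finally show ?thesis .
      qed
      ultimately show "\<exists>x\<in>A. dist x y < e" by blast
    qed
  qed
qed

lemma polyhedron_Q: "polyhedron Q"
proof -
  define Cc where "Cc c = (if c \<in> Z then {y::real^'v. axis c 1 \<bullet> y = 0}
      else if c \<in> Pos then {y. (- axis c 1) \<bullet> y \<le> 0}
      else if c \<in> Neg then {y. axis c 1 \<bullet> y \<le> 0} else UNIV)" for c
  have cc: "y \<in> Cc c \<longleftrightarrow> (c \<in> Z \<longrightarrow> y $ c = 0) \<and> (c \<in> Pos \<longrightarrow> 0 \<le> y $ c) \<and> (c \<in> Neg \<longrightarrow> y $ c \<le> 0)" for y c
    unfolding Cc_def using dZP dZN dPN by (auto simp: inner_axis')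
  have "Q = \<Inter> (range Cc)"
    unfolding Q_def using cc by blast
  moreover have "polyhedron (Cc c)" for c
    unfolding Cc_def by (auto intro: polyhedron_hyperplane polyhedron_halfspace_le polyhedron_halfspace_ge)
  ultimately show ?thesis by (metis finite finite_imageI imageE polyhedron_Inter)
qed

end

context geo begin

definition hh :: "'v \<Rightarrow> real \<Rightarrow> real" where
  "hh c t = (if c \<in> Pos then ln t else if c \<in> Neg then ln (- t) else t)"
definition kk :: "'v \<Rightarrow> real \<Rightarrow> real" where
  "kk c s = (if c \<in> Pos then exp s else if c \<in> Neg then - exp s else s)"

lemma hk: "hh c (kk c s) = s"
  unfolding hh_def kk_def using dPN by auto

lemma kh: "c \<in> Pos \<Longrightarrow> 0 < t \<Longrightarrow> kk c (hh c t) = t"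
  "c \<in> Neg \<Longrightarrow> t < 0 \<Longrightarrow> kk c (hh c t) = t"
  "c \<notin> Pos \<Longrightarrow> c \<notin> Neg \<Longrightarrow> kk c (hh c t) = t"
  unfolding hh_def kk_def using dPN by auto

lemma cont_kk: "continuous_on UNIV (kk c)"
  unfolding kk_def by (cases "c \<in> Pos"; cases "c \<in> Neg") (auto intro!: continuous_intros)

lemma cont_hh: "continuous_on A (\<lambda>y. hh c (y $ c))"
proof (cases "c \<in> Pos")
  case True
  then show ?thesis unfolding hh_def A_def by (auto intro!: continuous_intros)
next
  case False
  show ?thesis
  proof (cases "c \<in> Neg")
    case True
    then have "continuous_on A (\<lambda>y. ln (- (y $ c)))"
      unfolding A_def by (auto intro!: continuous_intros)
    then show ?thesis using True False unfolding hh_def by simp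
  next
    case F2: False
    then show ?thesis using False unfolding hh_def by (auto intro!: continuous_intros)
  qed
qed

lemma homeo_A: "top_of_set A homeomorphic_space Euclidean_space (card (UNIV - Z))"
proof -
  define J where "J = UNIV - Z"
  define n where "n = card J"
  obtain e where e: "bij_betw e {0..<n} J"
    using ex_bij_betw_nat_finite[of J] unfolding n_def by auto
  define ei where "ei = inv_into {0..<n} e"
  have e1: "i < n \<Longrightarrow> e i \<in> J" for i using e by (auto simp: bij_betw_def)
  have e2: "i < n \<Longrightarrow> ei (e i) = i" for i using e unfolding ei_def bij_betw_def
    by (simp add: inv_into_f_f)
  have e3: "c \<in> J \<Longrightarrow> ei c < n \<and> e (ei c) = c" for c using e unfolding ei_def bij_betw_def
    by (metis atLeastLessThan_iff f_inv_into_f inv_into_into)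
  define F where "F y = (\<lambda>i. if i < n then hh (e i) (y $ e i) else 0)" for y :: "real^'v"
  define G where "G x = (\<chi> c. if c \<in> J then kk c (x (ei c)) else 0)" for x :: "nat \<Rightarrow> real"
  have "homeomorphic_maps (top_of_set A) (Euclidean_space n) F G"
    unfolding homeomorphic_maps_def
  proof (intro conjI ballI)
    show "continuous_map (top_of_set A) (Euclidean_space n) F"
      unfolding F_def continuous_map_componentwise_Euclidean_space
      using cont_hh by simp
    have "continuous_map (Euclidean_space n) euclidean G"
      unfolding G_def
    proof (rule cmap_vec)
      fix c
      show "continuous_map (Euclidean_space n) euclideanreal
          (\<lambda>x. (\<chi> c. if c \<in> J then kk c (x (ei c)) else 0) $ c)"
      proof (cases "c \<in> J")
        case True
        have "continuous_map (Euclidean_space n) euclideanreal (\<lambda>x. x (ei c))"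
          unfolding Euclidean_space_def
          by (intro continuous_map_from_subtopology continuous_map_product_projection) simp
        then have "continuous_map (Euclidean_space n) euclideanreal (\<lambda>x. kk c (x (ei c)))"
          using continuous_map_compose[of _ euclideanreal "\<lambda>x. x (ei c)" euclideanreal "kk c"] cont_kk
          by (simp add: o_def)
        then show ?thesis using True by simp
      qed simp
    qed
    moreover have "G x \<in> A" for x
      unfolding G_def A_def J_def kk_def using dZP dZN dPN by auto
    ultimately show "continuous_map (Euclidean_space n) (top_of_set A) G"
      by (auto simp: continuous_map_in_subtopology)
    fix y assume y: "y \<in> topspace (top_of_set A)"
    then have yA: "y \<in> A" by simp
    show "G (F y) = y"
    proof (subst vec_eq_iff, intro allI)
      fix c
      show "G (F y) $ c = y $ c"
      proof (cases "c \<in> J")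
        case True
        then have "G (F y) $ c = kk c (hh c (y $ c))" unfolding G_def F_def using e3 by simp
        also have "\<dots> = y $ c" using yA kh unfolding A_def by (cases "c \<in> Pos"; cases "c \<in> Neg") auto
        finally show ?thesis .
      next
        case False then show ?thesis using yA unfolding G_def A_def J_def by simp
      qed
    qed
  next
    fix x assume x: "x \<in> topspace (Euclidean_space n)"
    show "F (G x) = x"
    proof
      fix i
      show "F (G x) i = x i"
      proof (cases "i < n")
        case True
        then show ?thesis unfolding F_def G_def using e1 e2 hk by simp
      next
        case False then show ?thesis using x unfolding F_def by (simp add: topspace_Euclidean_space)
      qed
    qed
  qed
  then show ?thesis unfolding homeomorphic_space_def n_def J_def by blast
qed

end

theorem proposition2p14:
  fixes E :: "'v::finite set set" and S :: "'v set" and P :: "'v set set"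
  assumes "is_tree UNIV E"
    and "(S, P) \<in> corresp E"
  shows "(subtopology (LT_top E) (LT_cell E S P)
           homeomorphic_space Euclidean_space (CARD('v) - card P)) \<and>
         (\<exists>\<alpha>\<in>S. \<exists>Q :: (real^'v) set. polyhedron Q \<and> Q \<subseteq> {y. y $ \<alpha> = 0} \<and>
           homeomorphic_map (top_of_set Q)
             (subtopology (LT_top E) ((LT_top E) closure_of (LT_cell E S P)))
             (chart E \<alpha>))"
proof -
  interpret tree E using assms(1) by unfold_locales
  have "S \<noteq> {}" using assms(2) unfolding corresp_def is_subtree_def is_tree_def by auto
  then obtain r where rS: "r \<in> S" by blast
  interpret cs: cellsetup E r S P using assms rS by unfold_locales
  interpret gg: geo "insert r cs.Xs" cs.Is cs.Os
    by unfold_locales (auto simp: cs.Xs_def cs.Is_def cs.Os_def)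
  have AA: "cs.Acell = gg.A" unfolding cs.Acell_def gg.A_def by auto
  have AH: "gg.A \<subseteq> {y. y $ r = 0}" unfolding gg.A_def by auto
  have QH: "gg.Q \<subseteq> {y. y $ r = 0}" unfolding gg.Q_def by auto
  have cell: "LT_cell E S P = chart E r ` gg.A"
  proof
    show "LT_cell E S P \<subseteq> chart E r ` gg.A"
    proof
      fix x assume x: "x \<in> LT_cell E S P"
      then have xL: "x \<in> LT E" and xS: "S_of x = S" and xP: "P_of E x = P" unfolding LT_cell_def by auto
      obtain a z where z: "z $ a = 0" "x = chart E a z" using LT_elem[OF xL] by blast
      have "in_chart r x" using xS rS unfolding S_of_def by auto
      then obtain y where "(r, y) \<in> x" unfolding in_chart_def by blast
      then have ry: "(r, y) \<in> chart E a z" using z(2) by simp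
      have y: "y $ r = 0" "chart E r y = x"
        using mem_chart_zero[OF z(1) ry] chart_of_mem[OF z(1) ry] z(2) by simp_all
      then have "y \<in> cs.Acell" using cs.cell_iff[OF y(1)] xS xP by simp
      then show "x \<in> chart E r ` gg.A" using y AA by blast
    qed
  next
    show "chart E r ` gg.A \<subseteq> LT_cell E S P"
    proof
      fix x assume "x \<in> chart E r ` gg.A"
      then obtain y where y: "y \<in> cs.Acell" "x = chart E r y" using AA by blast
      then have y0: "y $ r = 0" unfolding cs.Acell_def by simp
      show "x \<in> LT_cell E S P" using cs.cell_iff[OF y0] y chart_in_LT[OF y0] unfolding LT_cell_def by simp
    qed
  qed
  have card: "card (UNIV - insert r cs.Xs) = CARD('v) - card P"
  proof -
    have "r \<notin> cs.Xs" unfolding cs.Xs_def by simp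
    then have "card (insert r cs.Xs) = card P" using cs.card_P by simp
    then show ?thesis by (simp add: card_Diff_subset)
  qed
  have part1: "subtopology (LT_top E) (LT_cell E S P) homeomorphic_space Euclidean_space (CARD('v) - card P)"
  proof -
    have "top_of_set gg.A homeomorphic_space subtopology (LT_top E) (LT_cell E S P)"
      using homeomorphic_map_imp_homeomorphic_space[OF chart_hom[OF AH]] cell by simp
    then show ?thesis
      using gg.homeo_A card homeomorphic_space_sym homeomorphic_space_trans by metis
  qed
  have part2: "polyhedron gg.Q \<and> gg.Q \<subseteq> {y. y $ r = 0} \<and>
     homeomorphic_map (top_of_set gg.Q)
       (subtopology (LT_top E) ((LT_top E) closure_of (LT_cell E S P))) (chart E r)"
  proof -
    have "(LT_top E) closure_of (LT_cell E S P) = chart E r ` gg.Q"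
      using chart_closure[OF AH] cell gg.closure_A by simp
    then show ?thesis using gg.polyhedron_Q QH chart_hom[OF QH] by simp
  qed
  show ?thesis using part1 part2 rS by blast
qed

end
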